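(* Let $R$ be a noetherian domain and let $I$ be a nonzero ideal of $R$. \begin{enumerate} \item If $J$ is a nonzero ideal of $R$ with $I \subseteq J$ and $J/I \cong R/P$ as $R$-modules for some prime ideal $P \subseteq R$, then $\omega'(I) \le \omega'(J)+1$. \item $\omega'(I) < \infty$. \item $\sup \mathsf L_{\mathcal I(R)}(I) \le \omega'(I)$. In particular, $\mathcal I(R)$ is a BF-monoid. \end{enumerate}
   Context: For a domain $R$, $\mathcal I(R)$ denotes the commutative semigroup of all nonzero ideals of $R$ under ideal multiplication (identity $R$). For a nonzero ideal $I$ of $R$, $\omega'(I) \in \mathbb N_0\cup\{\infty\}$ is the smallest $N$ with the property: whenever $n \in \mathbb N$ and $J_1,\dots,J_n \in \mathcal I(R)$ satisfy $J_1\cdots J_n \subseteq I$, there is a subset $\Omega \subseteq \{1,\dots,n\}$ with $|\Omega|\le N$ and $\prod_{\lambda\in\Omega}J_\lambda \subseteq I$ (the empty product being $R$). A monoid means a commutative semigroup $H$ with identity which is unit-cancellative: if $a,u\in H$ and $a=au$, then $u$ is invertible. $H^\times$ is the group of units. An atom is a non-unit $u$ such that $u=ab$ implies $a\in H^\times$ or $b\in H^\times$. For $a\in H$, $\mathsf L_H(a)\subseteq\mathbb N_0$ is the set of all $\ell$ such that $a=\varepsilon u_1\cdots u_\ell$ with $\varepsilon\in H^\times$ and atoms $u_1,\dots,u_\ell$. $H$ is a BF-monoid if it is unit-cancellative and $\mathsf L_H(a)$ is finite and nonempty for every $a\in H$. *)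

theory Defs
  imports "HOL-Algebra.Ideal_Product" "HOL-Algebra.Ring_Divisibility" "HOL-Library.Extended_Nat"
begin

definition unit_cancellative :: "('a, 'b) monoid_scheme \<Rightarrow> bool" where
  "unit_cancellative H \<longleftrightarrow>
     (\<forall>a \<in> carrier H. \<forall>u \<in> carrier H. a = a \<otimes>\<^bsub>H\<^esub> u \<longrightarrow> u \<in> Units H)"

definition atom :: "('a, 'b) monoid_scheme \<Rightarrow> 'a \<Rightarrow> bool" where
  "atom H u \<longleftrightarrow> u \<in> carrier H \<and> u \<notin> Units H \<and>
     (\<forall>a \<in> carrier H. \<forall>b \<in> carrier H. u = a \<otimes>\<^bsub>H\<^esub> b \<longrightarrow> a \<in> Units H \<or> b \<in> Units H)"

definition list_prod :: "('a, 'b) monoid_scheme \<Rightarrow> 'a list \<Rightarrow> 'a" where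
  "list_prod H us = foldr (\<lambda>u acc. u \<otimes>\<^bsub>H\<^esub> acc) us \<one>\<^bsub>H\<^esub>"

definition lengths :: "('a, 'b) monoid_scheme \<Rightarrow> 'a \<Rightarrow> nat set" where
  "lengths H a = {length us | us. \<exists>\<epsilon> \<in> Units H. (\<forall>u \<in> set us. atom H u) \<and>
                                       a = \<epsilon> \<otimes>\<^bsub>H\<^esub> list_prod H us}"

definition BF_monoid :: "('a, 'b) monoid_scheme \<Rightarrow> bool" where
  "BF_monoid H \<longleftrightarrow> comm_monoid H \<and> unit_cancellative H \<and>
     (\<forall>a \<in> carrier H. finite (lengths H a) \<and> lengths H a \<noteq> {})"

definition nz_ideals :: "('a, 'b) ring_scheme \<Rightarrow> 'a set set" where
  "nz_ideals R = {I. ideal I R \<and> I \<noteq> {\<zero>\<^bsub>R\<^esub>}}"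

definition ideal_monoid :: "('a, 'b) ring_scheme \<Rightarrow> 'a set monoid" where
  "ideal_monoid R = \<lparr> carrier = nz_ideals R, monoid.mult = ideal_prod R, one = carrier R \<rparr>"

definition iprod :: "('a, 'b) ring_scheme \<Rightarrow> (nat \<Rightarrow> 'a set) \<Rightarrow> nat set \<Rightarrow> 'a set" where
  "iprod R J \<Omega> = foldr (\<lambda>i A. ideal_prod R (J i) A) (sorted_list_of_set \<Omega>) (carrier R)"

definition omega_prop :: "('a, 'b) ring_scheme \<Rightarrow> 'a set \<Rightarrow> enat \<Rightarrow> bool" where
  "omega_prop R I N \<longleftrightarrow>
     (\<forall>(n::nat) (J :: nat \<Rightarrow> 'a set). n \<ge> 1 \<longrightarrow> (\<forall>i \<in> {1..n}. J i \<in> nz_ideals R) \<longrightarrow>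
        iprod R J {1..n} \<subseteq> I \<longrightarrow>
        (\<exists>\<Omega> \<subseteq> {1..n}. enat (card \<Omega>) \<le> N \<and> iprod R J \<Omega> \<subseteq> I))"

text \<open>omega'(I): the least such N (infinity if none exists, as Inf {} = infinity in enat).\<close>
definition omega' :: "('a, 'b) ring_scheme \<Rightarrow> 'a set \<Rightarrow> enat" where
  "omega' R I = Inf {N. omega_prop R I N}"

text \<open>J/I is isomorphic to R/P as R-modules (for I subset J): there is a surjective R-linear
  map J \<rightarrow> R/P (given by representatives) with kernel exactly I.\<close>
definition quot_iso_RP :: "('a, 'b) ring_scheme \<Rightarrow> 'a set \<Rightarrow> 'a set \<Rightarrow> 'a set \<Rightarrow> bool" where
  "quot_iso_RP R I J P \<longleftrightarrow> (\<exists>\<phi>. \<phi> \<in> J \<rightarrow> carrier R \<and>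
     (\<forall>x \<in> J. \<forall>y \<in> J. \<phi> (x \<oplus>\<^bsub>R\<^esub> y) \<ominus>\<^bsub>R\<^esub> (\<phi> x \<oplus>\<^bsub>R\<^esub> \<phi> y) \<in> P) \<and>
     (\<forall>r \<in> carrier R. \<forall>x \<in> J. \<phi> (r \<otimes>\<^bsub>R\<^esub> x) \<ominus>\<^bsub>R\<^esub> (r \<otimes>\<^bsub>R\<^esub> \<phi> x) \<in> P) \<and>
     (\<forall>r \<in> carrier R. \<exists>x \<in> J. \<phi> x \<ominus>\<^bsub>R\<^esub> r \<in> P) \<and>
     (\<forall>x \<in> J. \<phi> x \<in> P \<longleftrightarrow> x \<in> I))"

end

theory Submission
  imports Defs
begin


context cring begin

lemma ideal_prod_subset:
  assumes "ideal K R" "\<And>i j. i \<in> A \<Longrightarrow> j \<in> B \<Longrightarrow> i \<otimes> j \<in> K"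
  shows "A \<cdot> B \<subseteq> K"
proof
  fix s assume "s \<in> A \<cdot> B" thus "s \<in> K"
  proof (induct s rule: ideal_prod.induct)
    case (prod i j) then show ?case using assms(2) by blast
  next
    case (sum s1 s2) then show ?case
      using assms(1) by (meson additive_subgroup.a_closed ideal.axioms(1))
  qed
qed

lemma colon_ideal:
  assumes "ideal K R" "x \<in> carrier R"
  shows "ideal {r \<in> carrier R. r \<otimes> x \<in> K} R"
proof (rule idealI[OF ring_axioms])
  show "subgroup {r \<in> carrier R. r \<otimes> x \<in> K} (add_monoid R)"
  proof
    show "{r \<in> carrier R. r \<otimes> x \<in> K} \<subseteq> carrier (add_monoid R)" by auto
    fix a b assume "a \<in> {r \<in> carrier R. r \<otimes> x \<in> K}" "b \<in> {r \<in> carrier R. r \<otimes> x \<in> K}"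
    then show "a \<otimes>\<^bsub>add_monoid R\<^esub> b \<in> {r \<in> carrier R. r \<otimes> x \<in> K}"
      using assms by (simp add: l_distr additive_subgroup.a_closed ideal.axioms(1))
  next
    show "\<one>\<^bsub>add_monoid R\<^esub> \<in> {r \<in> carrier R. r \<otimes> x \<in> K}"
      using assms by (simp add: additive_subgroup.zero_closed ideal.axioms(1))
  next
    fix a assume "a \<in> {r \<in> carrier R. r \<otimes> x \<in> K}"
    then show "inv\<^bsub>add_monoid R\<^esub> a \<in> {r \<in> carrier R. r \<otimes> x \<in> K}"
      using assms by (metis (no_types, lifting) a_inv_def add.inv_closed additive_subgroup.a_inv_closed ideal.axioms(1) l_minus mem_Collect_eq)
  qed
next
  fix a y assume "a \<in> {r \<in> carrier R. r \<otimes> x \<in> K}" "y \<in> carrier R"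
  then show "y \<otimes> a \<in> {r \<in> carrier R. r \<otimes> x \<in> K}"
    using assms by (simp add: m_assoc ideal.I_l_closed)
  then show "a \<otimes> y \<in> {r \<in> carrier R. r \<otimes> x \<in> K}"
    using \<open>a \<in> _\<close> \<open>y \<in> _\<close> by (simp add: m_comm)
qed

lemma ann_ideal:
  assumes "ideal K R" "r \<in> carrier R"
  shows "ideal {x \<in> carrier R. r \<otimes> x \<in> K} R"
proof -
  have "{x \<in> carrier R. r \<otimes> x \<in> K} = {x \<in> carrier R. x \<otimes> r \<in> K}"
    using assms by (auto simp: m_comm)
  then show ?thesis using colon_ideal[OF assms] by simp
qed

lemma ideal_prod_nz_ideal:
  assumes "ideal I R" "ideal J R"
  shows "ideal (I \<cdot> J) R" using ideal_prod_is_ideal[OF assms] .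

lemma iprod_empty: "iprod R J {} = carrier R"
  by (simp add: iprod_def)

lemma iprod_cong: "(\<And>i. i \<in> \<Omega> \<Longrightarrow> J i = J' i) \<Longrightarrow> finite \<Omega> \<Longrightarrow> iprod R J \<Omega> = iprod R J' \<Omega>"
  unfolding iprod_def by (rule foldr_cong) auto

lemma foldr_ideal:
  assumes "\<forall>i \<in> set xs. ideal (J i) R"
  shows "ideal (foldr (\<lambda>i A. J i \<cdot> A) xs (carrier R)) R"
  using assms by (induct xs) (auto simp: oneideal ideal_prod_is_ideal)

lemma iprod_ideal:
  assumes "finite \<Omega>" "\<forall>i \<in> \<Omega>. ideal (J i) R"
  shows "ideal (iprod R J \<Omega>) R"
  unfolding iprod_def using assms by (intro foldr_ideal) auto

lemma foldr_insort:
  assumes "\<forall>i \<in> set (x # xs). ideal (J i) R"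
  shows "foldr (\<lambda>i A. J i \<cdot> A) (insort x xs) (carrier R) = J x \<cdot> foldr (\<lambda>i A. J i \<cdot> A) xs (carrier R)"
  using assms
proof (induct xs)
  case Nil then show ?case by simp
next
  case (Cons y ys)
  have F: "ideal (foldr (\<lambda>i A. J i \<cdot> A) ys (carrier R)) R"
    using Cons.prems by (intro foldr_ideal) auto
  have Jx: "ideal (J x) R" and Jy: "ideal (J y) R" using Cons.prems by auto
  show ?case
  proof (cases "x \<le> y")
    case True then show ?thesis by simp
  next
    case False
    then have "foldr (\<lambda>i A. J i \<cdot> A) (insort x (y # ys)) (carrier R)
        = J y \<cdot> (J x \<cdot> foldr (\<lambda>i A. J i \<cdot> A) ys (carrier R))"
      using Cons by simp
    also have "\<dots> = J x \<cdot> (J y \<cdot> foldr (\<lambda>i A. J i \<cdot> A) ys (carrier R))"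
      using F Jx Jy by (metis ideal_prod_assoc ideal_prod_commute)
    finally show ?thesis by simp
  qed
qed

lemma iprod_insert:
  assumes "finite \<Omega>" "i \<notin> \<Omega>" "\<forall>j \<in> insert i \<Omega>. ideal (J j) R"
  shows "iprod R J (insert i \<Omega>) = J i \<cdot> iprod R J \<Omega>"
  unfolding iprod_def using assms
  by (simp add: sorted_list_of_set_insert foldr_insort)

lemma iprod_union:
  assumes "finite A" "finite B" "A \<inter> B = {}" "\<forall>j \<in> A \<union> B. ideal (J j) R"
  shows "iprod R J (A \<union> B) = iprod R J A \<cdot> iprod R J B"
  using assms
proof (induct A rule: finite_induct)
  case empty
  have "ideal (iprod R J B) R" using empty iprod_ideal[of B J] by simp
  then show ?case by (simp add: iprod_empty ideal_prod_commute[OF oneideal] ideal_prod_one)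
next
  case (insert x F)
  have "iprod R J (insert x F \<union> B) = iprod R J (insert x (F \<union> B))" by simp
  also have "\<dots> = J x \<cdot> iprod R J (F \<union> B)"
    using insert by (intro iprod_insert) auto
  also have "\<dots> = J x \<cdot> (iprod R J F \<cdot> iprod R J B)"
    using insert by auto
  also have "\<dots> = (J x \<cdot> iprod R J F) \<cdot> iprod R J B"
    using insert by (intro ideal_prod_assoc[symmetric] iprod_ideal) auto
  also have "\<dots> = iprod R J (insert x F) \<cdot> iprod R J B"
    using insert by (simp add: iprod_insert)
  finally show ?case .
qed

lemma iprod_subset_factor:
  assumes "finite \<Omega>" "i \<in> \<Omega>" "\<forall>j \<in> \<Omega>. ideal (J j) R"
  shows "iprod R J \<Omega> \<subseteq> J i"
proof -
  have "\<Omega> = insert i (\<Omega> - {i})" using assms by auto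
  then have "iprod R J \<Omega> = iprod R J (insert i (\<Omega> - {i}))" by simp
  also have "\<dots> = J i \<cdot> iprod R J (\<Omega> - {i})"
    using assms by (intro iprod_insert) auto
  finally have "iprod R J \<Omega> = J i \<cdot> iprod R J (\<Omega> - {i})" .
  also have "\<dots> \<subseteq> J i"
    using assms iprod_ideal[of "\<Omega> - {i}" J] ideal_prod_inter[of "J i"] by auto
  finally show ?thesis .
qed

lemma iprod_mono:
  assumes "finite B" "A \<subseteq> B" "\<forall>j \<in> B. ideal (J j) R"
  shows "iprod R J B \<subseteq> iprod R J A"
proof -
  have "B = A \<union> (B - A)" using assms by auto
  then have "iprod R J B = iprod R J A \<cdot> iprod R J (B - A)"
    using assms iprod_union[of A "B - A" J] finite_subset[of A B] by auto
  also have "\<dots> \<subseteq> iprod R J A"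
    using assms ideal_prod_inter[of "iprod R J A" "iprod R J (B - A)"] iprod_ideal[of A J] iprod_ideal[of "B - A" J]
    by (auto intro: finite_subset)
  finally show ?thesis .
qed

lemma iprod_prime:
  assumes "finite C" "\<forall>j \<in> C. ideal (J j) R" "primeideal P R" "iprod R J C \<subseteq> P"
  shows "\<exists>\<mu>\<in>C. J \<mu> \<subseteq> P"
  using assms
proof (induct C rule: finite_induct)
  case empty
  then show ?case using primeideal.I_notcarr[OF assms(3)] additive_subgroup.a_subset[OF ideal.axioms(1)[OF primeideal.axioms(1)[OF assms(3)]]]
    by (auto simp: iprod_empty)
next
  case (insert x F)
  then have "J x \<cdot> iprod R J F \<subseteq> P" by (simp add: iprod_insert)
  then have "J x \<subseteq> P \<or> iprod R J F \<subseteq> P"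
    using insert by (intro primeideal_divides_ideal_prod[OF assms(3)] iprod_ideal) auto
  then show ?case using insert by auto
qed

end



context cring begin

lemma sa_iff: "x \<in> H <+>\<^bsub>R\<^esub> K \<longleftrightarrow> (\<exists>h\<in>H. \<exists>k\<in>K. x = h \<oplus> k)"
  by (auto simp: set_add_def')

lemma pidl_iff: "x \<in> PIdl y \<longleftrightarrow> (\<exists>t\<in>carrier R. x = t \<otimes> y)"
  by (auto simp: cgenideal_def)

lemma sap_iff: "x \<in> H <+>\<^bsub>R\<^esub> PIdl y \<longleftrightarrow> (\<exists>h\<in>H. \<exists>t\<in>carrier R. x = h \<oplus> t \<otimes> y)"
  by (auto simp: set_add_def' cgenideal_def)

lemma idcarr: "ideal I R \<Longrightarrow> x \<in> I \<Longrightarrow> x \<in> carrier R"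
  by (rule ideal.Icarr)

lemma id_add: "ideal I R \<Longrightarrow> x \<in> I \<Longrightarrow> y \<in> I \<Longrightarrow> x \<oplus> y \<in> I"
  by (meson additive_subgroup.a_closed ideal.axioms(1))

lemma id_l: "ideal I R \<Longrightarrow> x \<in> I \<Longrightarrow> y \<in> carrier R \<Longrightarrow> y \<otimes> x \<in> I"
  by (rule ideal.I_l_closed)

lemma id_r: "ideal I R \<Longrightarrow> x \<in> I \<Longrightarrow> y \<in> carrier R \<Longrightarrow> x \<otimes> y \<in> I"
  by (rule ideal.I_r_closed)

lemma id_zero: "ideal I R \<Longrightarrow> \<zero> \<in> I"
  by (meson additive_subgroup.zero_closed ideal.axioms(1))

lemma nakayama:
  "finite A \<Longrightarrow> A \<subseteq> carrier R \<Longrightarrow> ideal U R \<Longrightarrow> ideal K R \<Longrightarrow>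
   (\<forall>x\<in>A. x \<in> (U \<cdot> (Idl A)) <+>\<^bsub>R\<^esub> K) \<Longrightarrow> \<exists>r\<in>carrier R. \<one> \<ominus> r \<in> U \<and> (\<forall>x\<in>A. r \<otimes> x \<in> K)"
proof (induct A arbitrary: K rule: finite_induct)
  case empty
  have e: "\<one> \<ominus> \<one> = \<zero>" using one_closed by algebra
  have "\<zero> \<in> U" using empty(2) by (rule id_zero)
  then have "\<one> \<ominus> \<one> \<in> U" by (metis e)
  then show ?case by (intro bexI[of _ \<one>]) auto
next
  case (insert y A')
  note U = insert.prems(2) and K = insert.prems(3)
  have yc: "y \<in> carrier R" and A'c: "A' \<subseteq> carrier R" using insert.prems by auto
  define M' where "M' = Idl A'"
  define M where "M = Idl (insert y A')"
  define K' where "K' = K <+>\<^bsub>R\<^esub> PIdl y"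
  have idM': "ideal M' R" unfolding M'_def using A'c by (rule genideal_ideal)
  have idM: "ideal M R" unfolding M_def using insert.prems by (intro genideal_ideal) auto
  have idP: "ideal (PIdl y) R" using yc by (rule cgenideal_ideal)
  have idK': "ideal K' R" unfolding K'_def using K idP by (rule add_ideals)
  have idUM': "ideal (U \<cdot> M') R" using U idM' by (rule ideal_prod_is_ideal)
  have idT: "ideal (U \<cdot> M' <+>\<^bsub>R\<^esub> PIdl y) R" using idUM' idP by (rule add_ideals)
  have M_sub: "M \<subseteq> M' <+>\<^bsub>R\<^esub> PIdl y"
    unfolding M_def
  proof (rule genideal_minimal[OF add_ideals[OF idM' idP]])
    show "insert y A' \<subseteq> M' <+>\<^bsub>R\<^esub> PIdl y"
    proof
      fix a assume "a \<in> insert y A'"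
      then show "a \<in> M' <+>\<^bsub>R\<^esub> PIdl y"
      proof
        assume "a = y"
        then have "a = \<zero> \<oplus> \<one> \<otimes> y" using yc by simp
        then show ?thesis using id_zero[OF idM'] yc unfolding sap_iff by blast
      next
        assume a: "a \<in> A'"
        then have ac: "a \<in> carrier R" using A'c by auto
        have "a = a \<oplus> \<zero> \<otimes> y" using ac yc by simp
        moreover have "a \<in> M'" unfolding M'_def using a A'c by (meson genideal_self subsetD)
        ultimately show ?thesis unfolding sap_iff by blast
      qed
    qed
  qed
  have UM_sub: "U \<cdot> M \<subseteq> U \<cdot> M' <+>\<^bsub>R\<^esub> PIdl y"
  proof (rule ideal_prod_subset[OF idT])
    fix u m assume u: "u \<in> U" and m: "m \<in> M"
    then obtain m' t where m': "m' \<in> M'" and t: "t \<in> carrier R" and e: "m = m' \<oplus> t \<otimes> y"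
      using subsetD[OF M_sub m] unfolding sap_iff by blast
    have uc: "u \<in> carrier R" using U u by (rule idcarr)
    have m'c: "m' \<in> carrier R" using idM' m' by (rule idcarr)
    have "u \<otimes> m = u \<otimes> m' \<oplus> (u \<otimes> t) \<otimes> y"
      using e uc m'c t yc by (simp add: r_distr m_assoc)
    moreover have "u \<otimes> m' \<in> U \<cdot> M'" using u m' by (rule ideal_prod.prod)
    moreover have "u \<otimes> t \<in> carrier R" using uc t by simp
    ultimately show "u \<otimes> m \<in> U \<cdot> M' <+>\<^bsub>R\<^esub> PIdl y" unfolding sap_iff by blast
  qed
  have hyp': "\<forall>x\<in>A'. x \<in> U \<cdot> (Idl A') <+>\<^bsub>R\<^esub> K'"
  proof
    fix x assume x: "x \<in> A'"
    then have "x \<in> U \<cdot> M <+>\<^bsub>R\<^esub> K" using insert.prems(4) M_def by auto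
    then obtain s k where s: "s \<in> U \<cdot> M" and k: "k \<in> K" and e: "x = s \<oplus> k"
      unfolding sa_iff by blast
    obtain s1 t where s1: "s1 \<in> U \<cdot> M'" and t: "t \<in> carrier R" and e2: "s = s1 \<oplus> t \<otimes> y"
      using subsetD[OF UM_sub s] unfolding sap_iff by blast
    have s1c: "s1 \<in> carrier R" using idUM' s1 by (rule idcarr)
    have kc: "k \<in> carrier R" using K k by (rule idcarr)
    have "x = s1 \<oplus> (k \<oplus> t \<otimes> y)" using e e2 s1c kc t yc by (simp add: a_ac)
    moreover have "k \<oplus> t \<otimes> y \<in> K'" unfolding K'_def sap_iff using k t by blast
    ultimately show "x \<in> U \<cdot> (Idl A') <+>\<^bsub>R\<^esub> K'" using s1 unfolding M'_def sa_iff by blast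
  qed
  obtain r' where r'c: "r' \<in> carrier R" and r'U: "\<one> \<ominus> r' \<in> U" and r'A: "\<forall>x\<in>A'. r' \<otimes> x \<in> K'"
    using insert.hyps(3)[OF A'c U idK' hyp'] by blast
  have rM: "M \<subseteq> {x \<in> carrier R. r' \<otimes> x \<in> K'}"
    unfolding M_def
  proof (rule genideal_minimal[OF ann_ideal[OF idK' r'c]])
    have "r' \<otimes> y \<in> K'" unfolding K'_def sap_iff
      using id_zero[OF K] r'c yc by (intro bexI[of _ \<zero>] bexI[of _ r']) auto
    then show "insert y A' \<subseteq> {x \<in> carrier R. r' \<otimes> x \<in> K'}" using r'A yc A'c by auto
  qed
  have rs: "\<exists>k\<in>K. \<exists>b\<in>U. r' \<otimes> s = k \<oplus> b \<otimes> y" if s: "s \<in> U \<cdot> M" for s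
    using s
  proof (induct s rule: ideal_prod.induct)
    case (prod u m)
    then have "r' \<otimes> m \<in> K <+>\<^bsub>R\<^esub> PIdl y" using rM unfolding K'_def by auto
    then obtain k t where k: "k \<in> K" and t: "t \<in> carrier R" and e: "r' \<otimes> m = k \<oplus> t \<otimes> y"
      unfolding sap_iff by blast
    have uc: "u \<in> carrier R" using U prod(1) by (rule idcarr)
    have mc: "m \<in> carrier R" using idM prod(2) by (rule idcarr)
    have kc: "k \<in> carrier R" using K k by (rule idcarr)
    have "r' \<otimes> (u \<otimes> m) = u \<otimes> (r' \<otimes> m)" using uc mc r'c by (simp add: m_lcomm)
    also have "\<dots> = u \<otimes> k \<oplus> (u \<otimes> t) \<otimes> y" using e uc kc t yc by (simp add: r_distr m_assoc)
    finally show ?case using id_l[OF K k uc] id_r[OF U prod(1) t] by blast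
  next
    case (sum s1 s2)
    then obtain k1 b1 k2 b2 where k1: "k1 \<in> K" and b1: "b1 \<in> U" and e1: "r' \<otimes> s1 = k1 \<oplus> b1 \<otimes> y"
      and k2: "k2 \<in> K" and b2: "b2 \<in> U" and e2: "r' \<otimes> s2 = k2 \<oplus> b2 \<otimes> y" by blast
    have s1c: "s1 \<in> carrier R" and s2c: "s2 \<in> carrier R"
      using sum ideal_prod_in_carrier[OF U idM] by auto
    have c: "k1 \<in> carrier R" "k2 \<in> carrier R" "b1 \<in> carrier R" "b2 \<in> carrier R"
      using k1 k2 b1 b2 K U idcarr by auto
    have "r' \<otimes> (s1 \<oplus> s2) = r' \<otimes> s1 \<oplus> r' \<otimes> s2" using s1c s2c r'c by (simp add: r_distr)
    also have "\<dots> = (k1 \<oplus> k2) \<oplus> (b1 \<oplus> b2) \<otimes> y" unfolding e1 e2 using c yc by algebra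
    finally show ?case using id_add[OF K k1 k2] id_add[OF U b1 b2] by blast
  qed
  have "y \<in> M" unfolding M_def using genideal_self[of "insert y A'"] insert.prems by auto
  then have "y \<in> U \<cdot> M <+>\<^bsub>R\<^esub> K" using insert.prems(4) M_def by auto
  then obtain s k0 where s: "s \<in> U \<cdot> M" and k0: "k0 \<in> K" and ey: "y = s \<oplus> k0"
    unfolding sa_iff by blast
  obtain k b where k: "k \<in> K" and b: "b \<in> U" and ers: "r' \<otimes> s = k \<oplus> b \<otimes> y" using rs[OF s] by blast
  have sc: "s \<in> carrier R" using s ideal_prod_in_carrier[OF U idM] by auto
  have c: "k0 \<in> carrier R" "k \<in> carrier R" "b \<in> carrier R" using k0 k b K U idcarr by auto
  have "(r' \<ominus> b) \<otimes> y = r' \<otimes> y \<ominus> b \<otimes> y" using r'c c yc by algebra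
  also have "\<dots> = (r' \<otimes> s \<oplus> r' \<otimes> k0) \<ominus> b \<otimes> y" using ey sc c r'c by (simp add: r_distr)
  also have "\<dots> = k \<oplus> r' \<otimes> k0" unfolding ers using c r'c yc by algebra
  finally have ry: "(r' \<ominus> b) \<otimes> y \<in> K" using id_add[OF K k id_l[OF K k0 r'c]] by simp
  define r where "r = (r' \<ominus> b) \<otimes> r'"
  have rc: "r \<in> carrier R" unfolding r_def using r'c c by simp
  have "\<one> \<ominus> r = (\<one> \<ominus> r') \<otimes> (\<one> \<oplus> r') \<oplus> b \<otimes> r'" unfolding r_def using r'c c by algebra
  moreover have "(\<one> \<ominus> r') \<otimes> (\<one> \<oplus> r') \<oplus> b \<otimes> r' \<in> U"
    using id_add[OF U id_r[OF U r'U] id_r[OF U b r'c]] r'c by simp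
  ultimately have rU: "\<one> \<ominus> r \<in> U" by simp
  have "\<forall>x\<in>insert y A'. r \<otimes> x \<in> K"
  proof
    fix x assume "x \<in> insert y A'"
    then show "r \<otimes> x \<in> K"
    proof
      assume "x = y"
      then have "r \<otimes> x = r' \<otimes> ((r' \<ominus> b) \<otimes> y)" unfolding r_def using r'c c yc by algebra
      then show ?thesis using id_l[OF K ry r'c] by simp
    next
      assume x: "x \<in> A'"
      then have xc: "x \<in> carrier R" using A'c by auto
      obtain k t where k: "k \<in> K" and t: "t \<in> carrier R" and e: "r' \<otimes> x = k \<oplus> t \<otimes> y"
        using bspec[OF r'A x] unfolding K'_def sap_iff by blast
      have kc: "k \<in> carrier R" using K k by (rule idcarr)
      have "r \<otimes> x = (r' \<ominus> b) \<otimes> (r' \<otimes> x)" unfolding r_def using r'c c xc by algebra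
      also have "\<dots> = (r' \<ominus> b) \<otimes> k \<oplus> t \<otimes> ((r' \<ominus> b) \<otimes> y)" unfolding e using r'c c kc t yc by algebra
      finally show ?thesis using id_add[OF K id_l[OF K k] id_l[OF K ry t]] r'c c by simp
    qed
  qed
  then show ?case using rc rU by blast
qed

end

context "domain" begin

lemma unit_cancel:
  assumes "noetherian_ring R" "ideal A R" "A \<noteq> {\<zero>}" "ideal U R" "A \<subseteq> A \<cdot> U"
  shows "U = carrier R"
proof -
  obtain S where S: "S \<subseteq> carrier R" "finite S" "A = Idl S"
    using noetherian_ring.finetely_gen[OF assms(1) assms(2)] by blast
  have "\<forall>x\<in>S. x \<in> U \<cdot> (Idl S) <+>\<^bsub>R\<^esub> {\<zero>}"
  proof
    fix x assume "x \<in> S"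
    then have "x \<in> A" using S genideal_self by auto
    then have "x \<in> U \<cdot> (Idl S)" using assms(5) S(3) ideal_prod_commute[OF assms(2) assms(4)] by auto
    moreover have "x = x \<oplus> \<zero>" using \<open>x \<in> S\<close> S by auto
    ultimately show "x \<in> U \<cdot> (Idl S) <+>\<^bsub>R\<^esub> {\<zero>}" unfolding sa_iff by blast
  qed
  then obtain r where rc: "r \<in> carrier R" and rU: "\<one> \<ominus> r \<in> U" and rS: "\<forall>x\<in>S. r \<otimes> x \<in> {\<zero>}"
    using nakayama[OF S(2) S(1) assms(4) zeroideal] by blast
  have "A \<subseteq> {x \<in> carrier R. r \<otimes> x \<in> {\<zero>}}"
    unfolding S(3) using rS S(1) by (intro genideal_minimal ann_ideal zeroideal rc) auto
  moreover obtain a where a: "a \<in> A" "a \<noteq> \<zero>" using assms(3) id_zero[OF assms(2)] by blast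
  ultimately have "r \<otimes> a = \<zero>" "a \<in> carrier R" by auto
  then have "r = \<zero>" using a rc integral by blast
  moreover have "\<one> \<ominus> \<zero> = \<one>" using one_closed by algebra
  ultimately have "\<one> \<in> U" using rU by simp
  then show ?thesis using ideal.one_imp_carrier[OF assms(4)] by simp
qed

end



lemma omega'_attained:
  assumes "omega' R I = enat N"
  shows "omega_prop R I (enat N)"
proof -
  define S where "S = {M. omega_prop R I M}"
  have ne: "S \<noteq> {}"
    using assms unfolding omega'_def Inf_enat_def S_def by (auto split: if_splits)
  have e: "omega' R I = (LEAST x. x \<in> S)" using ne unfolding omega'_def Inf_enat_def S_def by auto
  have "(LEAST x. x \<in> S) \<in> S" using ne by (metis LeastI ex_in_conv)
  then show ?thesis using assms e unfolding S_def by simp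
qed

lemma omega'_le: "omega_prop R I M \<Longrightarrow> omega' R I \<le> M"
  unfolding omega'_def by (rule Inf_lower) simp

context cring begin

lemma diffP:
  assumes "ideal P R" "x \<in> carrier R" "y \<in> carrier R" "x \<ominus> y \<in> P"
  shows "x \<in> P \<longleftrightarrow> y \<in> P"
proof
  assume "x \<in> P"
  have "y = x \<oplus> (\<ominus> (x \<ominus> y))" using assms by algebra
  moreover have "\<ominus> (x \<ominus> y) \<in> P" using assms(1,4) by (meson additive_subgroup.a_inv_closed ideal.axioms(1))
  ultimately show "y \<in> P" using id_add[OF assms(1) \<open>x \<in> P\<close>] by metis
next
  assume "y \<in> P"
  have "x = (x \<ominus> y) \<oplus> y" using assms by algebra
  then show "x \<in> P" using id_add[OF assms(1) assms(4) \<open>y \<in> P\<close>] by metis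
qed

lemma addM:
  assumes "ideal M R" "u \<in> M" "v \<in> carrier R"
  shows "u \<oplus> v \<in> M \<longleftrightarrow> v \<in> M"
proof
  assume h: "u \<oplus> v \<in> M"
  have uc: "u \<in> carrier R" using assms idcarr by auto
  have "v = (u \<oplus> v) \<oplus> (\<ominus> u)" using uc assms by algebra
  moreover have "\<ominus> u \<in> M" using assms(1,2) by (meson additive_subgroup.a_inv_closed ideal.axioms(1))
  ultimately show "v \<in> M" using id_add[OF assms(1) h] by metis
next
  assume "v \<in> M" then show "u \<oplus> v \<in> M" using id_add[OF assms(1) assms(2)] by blast
qed

lemma prime_mult:
  assumes "primeideal P R" "a \<in> carrier R" "b \<in> carrier R"
  shows "a \<otimes> b \<in> P \<longleftrightarrow> a \<in> P \<or> b \<in> P"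
proof
  assume "a \<otimes> b \<in> P" then show "a \<in> P \<or> b \<in> P" using primeideal.I_prime[OF assms(1) assms(2,3)] by blast
next
  have idP: "ideal P R" using assms(1) by (rule primeideal.axioms(1))
  assume "a \<in> P \<or> b \<in> P"
  then show "a \<otimes> b \<in> P"
  proof
    assume "a \<in> P" then show ?thesis using id_r[OF idP _ assms(3)] by blast
  next
    assume "b \<in> P" then show ?thesis using id_l[OF idP _ assms(2)] by blast
  qed
qed

lemma qiso_prop:
  assumes "ideal I R" "ideal J R" "I \<subseteq> J" "primeideal P R" "quot_iso_RP R I J P"
    and "a \<in> J" "r \<in> carrier R"
  shows "r \<otimes> a \<in> I \<longleftrightarrow> r \<in> P \<or> a \<in> I"
proof -
  obtain \<phi> where phi: "\<phi> \<in> J \<rightarrow> carrier R"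
    and lin: "\<forall>r \<in> carrier R. \<forall>x \<in> J. \<phi> (r \<otimes> x) \<ominus> (r \<otimes> \<phi> x) \<in> P"
    and ker: "\<forall>x \<in> J. \<phi> x \<in> P \<longleftrightarrow> x \<in> I"
    using assms(5) unfolding quot_iso_RP_def by blast
  have idP: "ideal P R" using assms(4) by (rule primeideal.axioms(1))
  have ra: "r \<otimes> a \<in> J" using assms by (simp add: id_l)
  have pa: "\<phi> a \<in> carrier R" using phi assms(6) by auto
  have pra: "\<phi> (r \<otimes> a) \<in> carrier R" using phi ra by auto
  have "r \<otimes> a \<in> I \<longleftrightarrow> \<phi> (r \<otimes> a) \<in> P" using ker ra by auto
  also have "\<dots> \<longleftrightarrow> r \<otimes> \<phi> a \<in> P"
  proof -
    have d: "\<phi> (r \<otimes> a) \<ominus> (r \<otimes> \<phi> a) \<in> P" using lin assms(6,7) by blast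
    have "r \<otimes> \<phi> a \<in> carrier R" using pa assms(7) by simp
    then show ?thesis by (rule diffP[OF idP pra _ d])
  qed
  also have "\<dots> \<longleftrightarrow> r \<in> P \<or> \<phi> a \<in> P" using prime_mult[OF assms(4) assms(7) pa] .
  also have "\<dots> \<longleftrightarrow> r \<in> P \<or> a \<in> I" using ker assms(6) by auto
  finally show ?thesis .
qed

lemma core:
  assumes I: "ideal I R" and J: "ideal J R" and IJ: "I \<subseteq> J" and P: "primeideal P R"
    and hp: "\<And>a r. a \<in> J \<Longrightarrow> r \<in> carrier R \<Longrightarrow> (r \<otimes> a \<in> I \<longleftrightarrow> r \<in> P \<or> a \<in> I)"
  shows "omega' R I \<le> omega' R J + 1"
proof (cases "omega' R J")
  case infinity
  then show ?thesis by simp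
next
  case (enat N)
  have pJ: "omega_prop R J (enat N)" using enat by (rule omega'_attained)
  have "omega_prop R I (enat (N + 1))"
    unfolding omega_prop_def
  proof (intro allI impI)
    fix n :: nat and Js :: "nat \<Rightarrow> 'a set"
    assume n: "n \<ge> 1" and nz: "\<forall>i\<in>{1..n}. Js i \<in> nz_ideals R" and sub: "iprod R Js {1..n} \<subseteq> I"
    have ids: "\<forall>i\<in>{1..n}. ideal (Js i) R" using nz by (auto simp: nz_ideals_def)
    obtain \<Omega> where \<Omega>: "\<Omega> \<subseteq> {1..n}" "enat (card \<Omega>) \<le> enat N" "iprod R Js \<Omega> \<subseteq> J"
      using pJ[unfolded omega_prop_def, rule_format, OF n nz[rule_format] order.trans[OF sub IJ]] by blast
    have fO: "finite \<Omega>" using \<Omega>(1) finite_subset by auto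
    have idO: "ideal (iprod R Js \<Omega>) R" using ids \<Omega>(1) fO by (intro iprod_ideal) auto
    show "\<exists>\<Omega>\<subseteq>{1..n}. enat (card \<Omega>) \<le> enat (N + 1) \<and> iprod R Js \<Omega> \<subseteq> I"
    proof (cases "iprod R Js \<Omega> \<subseteq> I")
      case True
      then show ?thesis using \<Omega> by (intro exI[of _ \<Omega>]) auto
    next
      case False
      then obtain a where a: "a \<in> iprod R Js \<Omega>" "a \<notin> I" by blast
      define C where "C = {1..n} - \<Omega>"
      have fC: "finite C" unfolding C_def by auto
      have idC: "ideal (iprod R Js C) R" using ids fC by (intro iprod_ideal) (auto simp: C_def)
      have un: "iprod R Js {1..n} = iprod R Js \<Omega> \<cdot> iprod R Js C"
      proof -
        have "{1..n} = \<Omega> \<union> C" using \<Omega>(1) C_def by auto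
        then show ?thesis using iprod_union[of \<Omega> C Js] fO fC ids C_def by auto
      qed
      have CP: "iprod R Js C \<subseteq> P"
      proof
        fix b assume b: "b \<in> iprod R Js C"
        have "a \<otimes> b \<in> I" using ideal_prod.prod[OF a(1) b, of R] un sub by auto
        moreover have "a \<otimes> b = b \<otimes> a" using a(1) b idcarr idO idC by (auto simp: m_comm)
        ultimately have "b \<otimes> a \<in> I" by simp
        moreover have "a \<in> J" using a \<Omega>(3) by auto
        moreover have "b \<in> carrier R" using b idC idcarr by auto
        ultimately show "b \<in> P" using hp a(2) by blast
      qed
      obtain \<mu> where \<mu>: "\<mu> \<in> C" "Js \<mu> \<subseteq> P"
        using iprod_prime[OF fC _ P CP] ids C_def by auto
      have mu1: "\<mu> \<notin> \<Omega>" "\<mu> \<in> {1..n}" using \<mu> C_def by auto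
      have "iprod R Js (insert \<mu> \<Omega>) = Js \<mu> \<cdot> iprod R Js \<Omega>"
        using mu1 fO ids \<Omega>(1) by (intro iprod_insert) auto
      also have "\<dots> \<subseteq> I"
      proof (rule ideal_prod_subset[OF I])
        fix p x assume p: "p \<in> Js \<mu>" and x: "x \<in> iprod R Js \<Omega>"
        have "x \<in> J" using x \<Omega>(3) by auto
        moreover have "p \<in> carrier R" using p ids mu1 idcarr by blast
        ultimately show "p \<otimes> x \<in> I" using hp p \<mu>(2) by blast
      qed
      finally have "iprod R Js (insert \<mu> \<Omega>) \<subseteq> I" .
      moreover have "card (insert \<mu> \<Omega>) = card \<Omega> + 1" using mu1 fO by simp
      ultimately show ?thesis using \<Omega> mu1 by (intro exI[of _ "insert \<mu> \<Omega>"]) auto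
    qed
  qed
  then have "omega' R I \<le> enat (N + 1)" by (rule omega'_le)
  then show ?thesis using enat by (simp add: one_enat_def)
qed

end




lemma IM_simps:
  "carrier (ideal_monoid R) = nz_ideals R"
  "x \<otimes>\<^bsub>ideal_monoid R\<^esub> y = ideal_prod R x y"
  "\<one>\<^bsub>ideal_monoid R\<^esub> = carrier R"
  by (simp_all add: ideal_monoid_def)

lemma lp_simps:
  "list_prod (ideal_monoid R) [] = carrier R"
  "list_prod (ideal_monoid R) (u # us) = ideal_prod R u (list_prod (ideal_monoid R) us)"
  by (simp_all add: list_prod_def ideal_monoid_def)

context noetherian_domain begin

abbreviation "lp \<equiv> list_prod (ideal_monoid R)"

lemma nz_ex: "ideal A R \<Longrightarrow> A \<noteq> {\<zero>} \<Longrightarrow> \<exists>a\<in>A. a \<noteq> \<zero>"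
  using id_zero by blast

lemma carrier_nz: "carrier R \<in> nz_ideals R"
  unfolding nz_ideals_def using oneideal one_not_zero one_closed by blast

lemma prod_nz:
  assumes "A \<in> nz_ideals R" "B \<in> nz_ideals R"
  shows "A \<cdot> B \<in> nz_ideals R"
proof -
  have iA: "ideal A R" and iB: "ideal B R" using assms by (auto simp: nz_ideals_def)
  obtain a where a: "a \<in> A" "a \<noteq> \<zero>" using assms nz_ex[OF iA] by (auto simp: nz_ideals_def)
  obtain b where b: "b \<in> B" "b \<noteq> \<zero>" using assms nz_ex[OF iB] by (auto simp: nz_ideals_def)
  have "a \<otimes> b \<in> A \<cdot> B" using a b by (intro ideal_prod.prod)
  moreover have "a \<otimes> b \<noteq> \<zero>" using a b iA iB idcarr integral by blast
  ultimately show ?thesis using ideal_prod_is_ideal[OF iA iB] unfolding nz_ideals_def by blast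
qed

lemma iprod_nz:
  "finite \<Omega> \<Longrightarrow> \<forall>j\<in>\<Omega>. J j \<in> nz_ideals R \<Longrightarrow> iprod R J \<Omega> \<in> nz_ideals R"
proof (induct \<Omega> rule: finite_induct)
  case empty then show ?case by (simp add: iprod_empty carrier_nz)
next
  case (insert x F)
  then have "iprod R J (insert x F) = J x \<cdot> iprod R J F"
    by (intro iprod_insert) (auto simp: nz_ideals_def)
  then show ?case using insert prod_nz by auto
qed

lemma omega_carrier: "omega' R (carrier R) \<le> 0"
proof -
  have "omega_prop R (carrier R) 0"
    unfolding omega_prop_def by (intro allI impI exI[of _ "{}"]) (auto simp: iprod_empty zero_enat_def)
  then show ?thesis by (rule omega'_le)
qed

lemma omega_fin:
  assumes "I \<in> nz_ideals R"
  shows "omega' R I < \<infinity>"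
proof (rule ccontr)
  assume "\<not> omega' R I < \<infinity>"
  define F where "F = {A \<in> nz_ideals R. omega' R A = \<infinity>}"
  have IF: "I \<in> F" using assms \<open>\<not> omega' R I < \<infinity>\<close> unfolding F_def by auto
  have "\<exists>M\<in>F. \<forall>X\<in>F. M \<subseteq> X \<longrightarrow> X = M"
  proof (rule subset_Zorn_nonempty)
    show "F \<noteq> {}" using IF by blast
  next
    fix C assume C: "C \<noteq> {}" "subset.chain F C"
    then have "subset.chain {I. ideal I R} C"
      unfolding pred_on.chain_def F_def nz_ideals_def by auto
    from ideal_chain_is_trivial[OF C(1) this] have "\<Union>C \<in> C" .
    then show "\<Union>C \<in> F" using C(2) unfolding pred_on.chain_def by auto
  qed
  then obtain M where M: "M \<in> F" and Mmax: "\<forall>X\<in>F. M \<subseteq> X \<longrightarrow> X = M" by blast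
  have idM: "ideal M R" and MnZ: "M \<noteq> {\<zero>}" and Minf: "omega' R M = \<infinity>"
    using M unfolding F_def nz_ideals_def by auto
  have Mne: "M \<noteq> carrier R" using Minf omega_carrier by (auto simp: zero_enat_def)
  have one_nM: "\<one> \<notin> M" using ideal.one_imp_carrier[OF idM] Mne by blast
  define col where "col x = {r \<in> carrier R. r \<otimes> x \<in> M}" for x
  define G where "G = {col x | x. x \<in> carrier R \<and> x \<notin> M}"
  have idcol: "ideal (col x) R" if "x \<in> carrier R" for x
    unfolding col_def using colon_ideal[OF idM that] .
  have "\<exists>Q\<in>G. \<forall>X\<in>G. Q \<subseteq> X \<longrightarrow> X = Q"
  proof (rule subset_Zorn_nonempty)
    show "G \<noteq> {}" using one_nM unfolding G_def by blast
  next
    fix C assume C: "C \<noteq> {}" "subset.chain G C"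
    then have "subset.chain {I. ideal I R} C"
      unfolding pred_on.chain_def G_def using idcol by auto
    from ideal_chain_is_trivial[OF C(1) this] have "\<Union>C \<in> C" .
    then show "\<Union>C \<in> G" using C(2) unfolding pred_on.chain_def by auto
  qed
  then obtain Q where Q: "Q \<in> G" and Qmax: "\<forall>X\<in>G. Q \<subseteq> X \<longrightarrow> X = Q" by blast
  obtain x0 where x0: "x0 \<in> carrier R" "x0 \<notin> M" "Q = col x0" using Q unfolding G_def by blast
  have idQ: "ideal Q R" using idcol x0 by simp
  have Qprime: "primeideal Q R"
  proof (rule primeidealI[OF idQ is_cring])
    show "carrier R \<noteq> Q"
    proof
      assume "carrier R = Q"
      then have "\<one> \<in> col x0" using x0 one_closed by simp
      then show False using x0 unfolding col_def by simp
    qed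
  next
    fix a b assume a: "a \<in> carrier R" and b: "b \<in> carrier R" and ab: "a \<otimes> b \<in> Q"
    show "a \<in> Q \<or> b \<in> Q"
    proof (cases "a \<in> Q")
      case True then show ?thesis by blast
    next
      case False
      then have ax: "a \<otimes> x0 \<notin> M" using x0 a unfolding col_def by auto
      have "col (a \<otimes> x0) \<in> G" using ax a x0 unfolding G_def by auto
      moreover have "Q \<subseteq> col (a \<otimes> x0)"
      proof
        fix r assume "r \<in> Q"
        then have r: "r \<in> carrier R" "r \<otimes> x0 \<in> M" using x0 unfolding col_def by auto
        have "r \<otimes> (a \<otimes> x0) = a \<otimes> (r \<otimes> x0)" using r a x0 by (simp add: m_lcomm)
        then show "r \<in> col (a \<otimes> x0)" using id_l[OF idM r(2) a] r unfolding col_def by simp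
      qed
      ultimately have e: "col (a \<otimes> x0) = Q" using Qmax by blast
      have "(a \<otimes> b) \<otimes> x0 \<in> M" using ab x0 unfolding col_def by auto
      moreover have "(a \<otimes> b) \<otimes> x0 = b \<otimes> (a \<otimes> x0)" using a b x0 by (simp add: m_ac)
      ultimately have "b \<in> col (a \<otimes> x0)" using b unfolding col_def by simp
      then show ?thesis using e by simp
    qed
  qed
  define J where "J = M <+>\<^bsub>R\<^esub> PIdl x0"
  have idJ: "ideal J R" unfolding J_def using idM cgenideal_ideal[OF x0(1)] by (rule add_ideals)
  have MJ: "M \<subseteq> J"
  proof
    fix m assume m: "m \<in> M"
    then have "m = m \<oplus> \<zero> \<otimes> x0" using idM idcarr x0 by auto
    then show "m \<in> J" unfolding J_def sap_iff using m by blast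
  qed
  have x0J: "x0 \<in> J"
  proof -
    have "x0 = \<zero> \<oplus> \<one> \<otimes> x0" using x0 by simp
    then show ?thesis unfolding J_def sap_iff using id_zero[OF idM] by blast
  qed
  have JnZ: "J \<in> nz_ideals R" using idJ MJ MnZ id_zero[OF idM] unfolding nz_ideals_def by blast
  have hp: "r \<otimes> a \<in> M \<longleftrightarrow> r \<in> Q \<or> a \<in> M" if a: "a \<in> J" and r: "r \<in> carrier R" for a r
  proof -
    obtain m t where m: "m \<in> M" and t: "t \<in> carrier R" and e: "a = m \<oplus> t \<otimes> x0"
      using a unfolding J_def sap_iff by blast
    have mc: "m \<in> carrier R" using idM m idcarr by auto
    have "r \<otimes> a = r \<otimes> m \<oplus> (r \<otimes> t) \<otimes> x0" using e mc t r x0 by (simp add: r_distr m_assoc)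
    then have "r \<otimes> a \<in> M \<longleftrightarrow> (r \<otimes> t) \<otimes> x0 \<in> M"
      using addM[OF idM id_l[OF idM m r], of "(r \<otimes> t) \<otimes> x0"] r t x0 by simp
    also have "\<dots> \<longleftrightarrow> r \<otimes> t \<in> Q" using x0 r t unfolding col_def by simp
    also have "\<dots> \<longleftrightarrow> r \<in> Q \<or> t \<in> Q" by (rule prime_mult[OF Qprime r t])
    also have "t \<in> Q \<longleftrightarrow> a \<in> M"
      using addM[OF idM m, of "t \<otimes> x0"] e t x0 unfolding col_def by simp
    finally show ?thesis .
  qed
  have le: "omega' R M \<le> omega' R J + 1" by (rule core[OF idM idJ MJ Qprime hp])
  have "J \<notin> F" using Mmax MJ x0J x0(2) by blast
  then have "omega' R J \<noteq> \<infinity>" using JnZ unfolding F_def by auto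
  then obtain K where "omega' R J = enat K" by auto
  then have "omega' R J + 1 \<noteq> \<infinity>" by (simp add: one_enat_def)
  then show False using le Minf by (simp add: top.extremum_unique[symmetric] top_enat_def)
qed

end



context noetherian_domain begin

lemma lp_ideal: "\<forall>u\<in>set us. ideal u R \<Longrightarrow> ideal (lp us) R"
  by (induct us) (auto simp: lp_simps oneideal ideal_prod_is_ideal)

lemma lp_nz: "\<forall>u\<in>set us. u \<in> nz_ideals R \<Longrightarrow> lp us \<in> nz_ideals R"
  by (induct us) (auto simp: lp_simps carrier_nz prod_nz)

lemma lp_iprod:
  "\<forall>u\<in>set us. ideal u R \<Longrightarrow> iprod R (\<lambda>i. us ! (i - Suc k)) {Suc k..k + length us} = lp us"
proof (induct us arbitrary: k)
  case Nil then show ?case by (simp add: iprod_empty lp_simps)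
next
  case (Cons u us)
  define Jf where "Jf = (\<lambda>i. (u # us) ! (i - Suc k))"
  have set: "{Suc k..k + length (u # us)} = insert (Suc k) {Suc (Suc k)..Suc k + length us}" by auto
  have ids: "\<forall>j\<in>insert (Suc k) {Suc (Suc k)..Suc k + length us}. ideal (Jf j) R"
  proof
    fix j assume j: "j \<in> insert (Suc k) {Suc (Suc k)..Suc k + length us}"
    then have "j - Suc k < length (u # us)" by auto
    then have "Jf j \<in> set (u # us)" unfolding Jf_def by (rule nth_mem)
    then show "ideal (Jf j) R" using Cons.prems by blast
  qed
  have "iprod R Jf {Suc k..k + length (u # us)} = Jf (Suc k) \<cdot> iprod R Jf {Suc (Suc k)..Suc k + length us}"
    unfolding set using ids by (intro iprod_insert) auto
  also have "Jf (Suc k) = u" unfolding Jf_def by simp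
  also have "iprod R Jf {Suc (Suc k)..Suc k + length us} = iprod R (\<lambda>i. us ! (i - Suc (Suc k))) {Suc (Suc k)..Suc k + length us}"
  proof (rule iprod_cong)
    fix i assume "i \<in> {Suc (Suc k)..Suc k + length us}"
    then have "i - Suc k = Suc (i - Suc (Suc k))" by auto
    then show "Jf i = us ! (i - Suc (Suc k))" unfolding Jf_def by simp
  qed simp
  also have "\<dots> = lp us" by (rule Cons.hyps) (use Cons.prems in simp)
  finally show ?case unfolding Jf_def by (simp add: lp_simps)
qed

lemma len_bound:
  assumes us: "\<forall>u\<in>set us. u \<in> nz_ideals R \<and> u \<noteq> carrier R"
    and om: "omega_prop R (lp us) (enat N)"
  shows "length us \<le> N"
proof (cases "us = []")
  case True then show ?thesis by simp
next
  case False
  define n where "n = length us"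
  define Js where "Js = (\<lambda>i. us ! (i - 1))"
  have n1: "n \<ge> 1" using False n_def by (cases us) auto
  have JsI: "Js i \<in> set us" if "i \<in> {1..n}" for i
    using that unfolding Js_def n_def by (intro nth_mem) auto
  have ids: "\<forall>i\<in>{1..n}. ideal (Js i) R" using JsI us by (auto simp: nz_ideals_def)
  have nzs: "\<forall>i\<in>{1..n}. Js i \<in> nz_ideals R" using JsI us by auto
  have ip: "iprod R Js {1..n} = lp us"
    using lp_iprod[of us 0] us unfolding Js_def n_def by (auto simp: nz_ideals_def)
  obtain \<Omega> where \<Omega>: "\<Omega> \<subseteq> {1..n}" "enat (card \<Omega>) \<le> enat N" "iprod R Js \<Omega> \<subseteq> lp us"
  proof -
    have h: "\<forall>(n::nat) J. n \<ge> 1 \<longrightarrow> (\<forall>i\<in>{1..n}. J i \<in> nz_ideals R) \<longrightarrow> iprod R J {1..n} \<subseteq> lp us \<longrightarrow>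
        (\<exists>\<Omega>\<subseteq>{1..n}. enat (card \<Omega>) \<le> enat N \<and> iprod R J \<Omega> \<subseteq> lp us)"
      using om unfolding omega_prop_def .
    have h2: "n \<ge> 1 \<longrightarrow> (\<forall>i\<in>{1..n}. Js i \<in> nz_ideals R) \<longrightarrow> iprod R Js {1..n} \<subseteq> lp us \<longrightarrow>
        (\<exists>\<Omega>\<subseteq>{1..n}. enat (card \<Omega>) \<le> enat N \<and> iprod R Js \<Omega> \<subseteq> lp us)"
      using spec[OF spec[OF h, of n], of Js] .
    have "\<exists>\<Omega>\<subseteq>{1..n}. enat (card \<Omega>) \<le> enat N \<and> iprod R Js \<Omega> \<subseteq> lp us"
      using mp[OF mp[OF mp[OF h2 n1] nzs] equalityD1[OF ip]] .
    then show ?thesis using that by blast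
  qed
  have "\<Omega> = {1..n}"
  proof (rule ccontr)
    assume "\<Omega> \<noteq> {1..n}"
    then obtain \<mu> where \<mu>: "\<mu> \<in> {1..n}" "\<mu> \<notin> \<Omega>" using \<Omega>(1) by blast
    define C where "C = {1..n} - \<Omega>"
    have fO: "finite \<Omega>" using \<Omega>(1) finite_subset by auto
    have fC: "finite C" unfolding C_def by auto
    have "{1..n} = \<Omega> \<union> C" using \<Omega>(1) C_def by auto
    then have un: "lp us = iprod R Js \<Omega> \<cdot> iprod R Js C"
      using iprod_union[of \<Omega> C Js] fO fC ids C_def ip by auto
    have Anz: "iprod R Js \<Omega> \<in> nz_ideals R" using iprod_nz[OF fO] nzs \<Omega>(1) by auto
    have idC: "ideal (iprod R Js C) R" using ids fC by (intro iprod_ideal) (auto simp: C_def)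
    have "iprod R Js C = carrier R"
    proof (rule unit_cancel[OF noetherian_ring_axioms, of "iprod R Js \<Omega>"])
      show "ideal (iprod R Js \<Omega>) R" "iprod R Js \<Omega> \<noteq> {\<zero>}" using Anz by (auto simp: nz_ideals_def)
      show "ideal (iprod R Js C) R" by (rule idC)
      show "iprod R Js \<Omega> \<subseteq> iprod R Js \<Omega> \<cdot> iprod R Js C" using \<Omega>(3) un by simp
    qed
    moreover have "iprod R Js C \<subseteq> Js \<mu>"
      using \<mu> ids fC by (intro iprod_subset_factor) (auto simp: C_def)
    moreover have "Js \<mu> \<subseteq> carrier R" using ids \<mu> idcarr by blast
    ultimately have "Js \<mu> = carrier R" by blast
    then show False using JsI[OF \<mu>(1)] us by auto
  qed
  then show ?thesis using \<Omega>(2) n_def by simp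
qed

end


context noetherian_domain begin
lemma Units_IM: "Units (ideal_monoid R) = {carrier R}"
proof
  show "Units (ideal_monoid R) \<subseteq> {carrier R}"
  proof
    fix y assume "y \<in> Units (ideal_monoid R)"
    then obtain x where y: "y \<in> nz_ideals R" and x: "x \<in> nz_ideals R" and e: "x \<cdot> y = carrier R"
      unfolding Units_def IM_simps by blast
    have "x \<cdot> y \<subseteq> y" using ideal_prod_inter x y by (auto simp: nz_ideals_def)
    moreover have "y \<subseteq> carrier R" using y idcarr by (auto simp: nz_ideals_def)
    ultimately show "y \<in> {carrier R}" using e by auto
  qed
next
  show "{carrier R} \<subseteq> Units (ideal_monoid R)"
    unfolding Units_def IM_simps using carrier_nz ideal_prod_one[OF oneideal] by auto
qed

lemma atom_IM: "atom (ideal_monoid R) u \<Longrightarrow> u \<in> nz_ideals R \<and> u \<noteq> carrier R"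
  unfolding atom_def Units_IM IM_simps by auto

lemma lengths_bound:
  assumes a: "a \<in> nz_ideals R" and l: "l \<in> lengths (ideal_monoid R) a"
  shows "enat l \<le> omega' R a"
proof -
  obtain us \<epsilon> where l: "l = length us" and eps: "\<epsilon> \<in> Units (ideal_monoid R)"
    and at: "\<forall>u \<in> set us. atom (ideal_monoid R) u" and e: "a = \<epsilon> \<otimes>\<^bsub>ideal_monoid R\<^esub> lp us"
    using l unfolding lengths_def by blast
  have us: "\<forall>u\<in>set us. u \<in> nz_ideals R \<and> u \<noteq> carrier R" using at atom_IM by blast
  have idl: "ideal (lp us) R" using us by (intro lp_ideal) (auto simp: nz_ideals_def)
  have "a = lp us" using e eps unfolding Units_IM IM_simps
    by (simp add: ideal_prod_commute[OF oneideal idl] ideal_prod_one[OF idl])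
  show ?thesis
  proof (cases "omega' R a")
    case (enat N)
    then have "omega_prop R (lp us) (enat N)" using omega'_attained \<open>a = lp us\<close> by metis
    then show ?thesis using len_bound[OF us] l enat by simp
  qed simp
qed

end


context noetherian_domain begin
lemma lp_app: "lp zs1 = lp zs2 \<Longrightarrow> lp (xs @ zs1) = lp (xs @ zs2)"
  by (induct xs) (auto simp: lp_simps)

lemma lengths_ne:
  assumes a: "a \<in> nz_ideals R"
  shows "lengths (ideal_monoid R) a \<noteq> {}"
proof -
  obtain N where N: "omega' R a = enat N" using omega_fin[OF a] by (cases "omega' R a") auto
  have pa: "omega_prop R a (enat N)" using N by (rule omega'_attained)
  define S where "S = {length us | us. (\<forall>u\<in>set us. u \<in> nz_ideals R \<and> u \<noteq> carrier R) \<and> a = lp us}"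
  have SN: "S \<subseteq> {..N}"
  proof
    fix x assume "x \<in> S"
    then obtain us where x: "x = length us" and p: "\<forall>u\<in>set us. u \<in> nz_ideals R \<and> u \<noteq> carrier R"
      and e: "a = lp us" unfolding S_def by blast
    have "omega_prop R (lp us) (enat N)" using pa e by simp
    then show "x \<in> {..N}" using len_bound[OF p] x by simp
  qed
  have fS: "finite S" using finite_subset[OF SN] by simp
  have "S \<noteq> {}"
  proof (cases "a = carrier R")
    case True
    then have "length [] \<in> S" unfolding S_def mem_Collect_eq by (intro exI[of _ "[]"]) (simp add: lp_simps)
    then show ?thesis by blast
  next
    case False
    have "lp [a] = a" using a by (simp add: lp_simps ideal_prod_one nz_ideals_def)
    then have "(\<forall>u\<in>set [a]. u \<in> nz_ideals R \<and> u \<noteq> carrier R) \<and> a = lp [a]" using a False by auto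
    then have "length [a] \<in> S" unfolding S_def mem_Collect_eq by (intro exI[of _ "[a]"]) simp
    then show ?thesis by blast
  qed
  then have mS: "Max S \<in> S" using Max_in[OF fS] by blast
  define m where "m = Max S"
  have "m \<in> S" using mS m_def by simp
  then obtain us where us: "\<forall>u\<in>set us. u \<in> nz_ideals R \<and> u \<noteq> carrier R" and ea: "a = lp us"
    and lm0: "m = length us" unfolding S_def by blast
  have lm: "length us = Max S" using lm0 m_def by simp
  have "\<forall>u\<in>set us. atom (ideal_monoid R) u"
  proof (rule ccontr)
    assume "\<not> (\<forall>u\<in>set us. atom (ideal_monoid R) u)"
    then obtain u where u: "u \<in> set us" and na: "\<not> atom (ideal_monoid R) u" by blast
    have u1: "u \<in> nz_ideals R" "u \<noteq> carrier R" using u us by auto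
    have "\<not> (\<forall>x\<in>nz_ideals R. \<forall>y\<in>nz_ideals R. u = x \<cdot> y \<longrightarrow> x = carrier R \<or> y = carrier R)"
      using na u1 unfolding atom_def Units_IM IM_simps by simp
    then obtain b c where b: "b \<in> nz_ideals R" "b \<noteq> carrier R" and c: "c \<in> nz_ideals R" "c \<noteq> carrier R"
      and ubc: "u = b \<cdot> c" by blast
    obtain xs ys where sp: "us = xs @ u # ys" using split_list[OF u] by blast
    have ys: "\<forall>v\<in>set ys. v \<in> nz_ideals R" using us sp by auto
    have idys: "ideal (lp ys) R" using ys by (intro lp_ideal) (auto simp: nz_ideals_def)
    have l0: "lp (b # c # ys) = lp (u # ys)"
      using b c idys ubc by (simp add: lp_simps ideal_prod_assoc nz_ideals_def)
    have l1: "lp (xs @ b # c # ys) = lp us" using lp_app[OF l0, of xs] sp by simp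
    have l2: "\<forall>v\<in>set (xs @ b # c # ys). v \<in> nz_ideals R \<and> v \<noteq> carrier R" using us sp b c by auto
    have "length (xs @ b # c # ys) \<in> S" unfolding S_def mem_Collect_eq
      by (intro exI[of _ "xs @ b # c # ys"]) (simp add: l1 l2 ea)
    then have "length (xs @ b # c # ys) \<le> Max S" by (rule Max_ge[OF fS])
    then show False using lm sp by simp
  qed
  moreover have "a = carrier R \<otimes>\<^bsub>ideal_monoid R\<^esub> lp us"
  proof -
    have idl: "ideal (lp us) R" using us by (intro lp_ideal) (auto simp: nz_ideals_def)
    show ?thesis using ea by (simp add: IM_simps ideal_prod_commute[OF oneideal idl] ideal_prod_one[OF idl])
  qed
  ultimately have "length us \<in> lengths (ideal_monoid R) a"
    unfolding lengths_def Units_IM mem_Collect_eq by (intro exI[of _ us]) auto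
  then show ?thesis by blast
qed

lemma comm_monoid_IM: "comm_monoid (ideal_monoid R)"
proof (rule comm_monoidI, unfold IM_simps)
  fix x y assume "x \<in> nz_ideals R" "y \<in> nz_ideals R"
  then show "x \<cdot> y \<in> nz_ideals R" by (rule prod_nz)
next
  show "carrier R \<in> nz_ideals R" by (rule carrier_nz)
next
  fix x y z assume "x \<in> nz_ideals R" "y \<in> nz_ideals R" "z \<in> nz_ideals R"
  then show "x \<cdot> y \<cdot> z = x \<cdot> (y \<cdot> z)" by (intro ideal_prod_assoc) (auto simp: nz_ideals_def)
next
  fix x assume "x \<in> nz_ideals R"
  then show "carrier R \<cdot> x = x"
    using ideal_prod_commute[OF oneideal, of x] ideal_prod_one[of x] by (simp add: nz_ideals_def)
next
  fix x y assume "x \<in> nz_ideals R" "y \<in> nz_ideals R"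
  then show "x \<cdot> y = y \<cdot> x" by (intro ideal_prod_commute) (auto simp: nz_ideals_def)
qed

lemma unit_canc_IM: "unit_cancellative (ideal_monoid R)"
  unfolding unit_cancellative_def Units_IM IM_simps
proof (intro ballI impI)
  fix a u assume a: "a \<in> nz_ideals R" and u: "u \<in> nz_ideals R" and e: "a = a \<cdot> u"
  then have "u = carrier R"
    using unit_cancel[OF noetherian_ring_axioms, of a u] by (auto simp: nz_ideals_def)
  then show "u \<in> {carrier R}" by simp
qed

end

theorem proposition2p2:
  fixes R :: "('a, 'b) ring_scheme" and I :: "'a set"
  assumes "noetherian_domain R"
    and "I \<in> nz_ideals R"
  shows "(\<forall>J P. J \<in> nz_ideals R \<longrightarrow> I \<subseteq> J \<longrightarrow> primeideal P R \<longrightarrow> quot_iso_RP R I J P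
            \<longrightarrow> omega' R I \<le> omega' R J + 1)
       \<and> omega' R I < \<infinity>
       \<and> Sup (enat ` lengths (ideal_monoid R) I) \<le> omega' R I
       \<and> BF_monoid (ideal_monoid R)"
proof -
  interpret noetherian_domain R by fact
  have idI: "ideal I R" using assms(2) by (simp add: nz_ideals_def)
  have p1: "\<forall>J P. J \<in> nz_ideals R \<longrightarrow> I \<subseteq> J \<longrightarrow> primeideal P R \<longrightarrow> quot_iso_RP R I J P
            \<longrightarrow> omega' R I \<le> omega' R J + 1"
  proof (intro allI impI)
    fix J P assume J: "J \<in> nz_ideals R" and IJ: "I \<subseteq> J" and P: "primeideal P R" and q: "quot_iso_RP R I J P"
    have idJ: "ideal J R" using J by (simp add: nz_ideals_def)
    show "omega' R I \<le> omega' R J + 1"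
      by (rule core[OF idI idJ IJ P qiso_prop[OF idI idJ IJ P q]])
  qed
  have p3: "Sup (enat ` lengths (ideal_monoid R) I) \<le> omega' R I"
    using lengths_bound[OF assms(2)] by (auto intro: Sup_least)
  have p4: "BF_monoid (ideal_monoid R)"
    unfolding BF_monoid_def
  proof (intro conjI ballI comm_monoid_IM unit_canc_IM)
    fix a assume "a \<in> carrier (ideal_monoid R)"
    then have a: "a \<in> nz_ideals R" by (simp add: IM_simps)
    obtain N where N: "omega' R a = enat N" using omega_fin[OF a] by (cases "omega' R a") auto
    have "lengths (ideal_monoid R) a \<subseteq> {..N}" using lengths_bound[OF a] N by auto
    then show "finite (lengths (ideal_monoid R) a)" using finite_subset by blast
    show "lengths (ideal_monoid R) a \<noteq> {}" using lengths_ne[OF a] .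
  qed
  show ?thesis using p1 omega_fin[OF assms(2)] p3 p4 by blast
qed


end
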